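(* For every integer $k\ge2$, every integer constant $c\ge 1$ and every $h>1/k$, there is an instance with $k$ groups of binary agents in which no allocation is $h$-democratic EF$c$.
   Context: There is a finite set $G$ of goods and $k$ groups $A_1,\dots,A_k$ with $n_i\ge1$ agents in $A_i$. A binary agent has an additive utility with $u_a(\{g\})\in\{0,1\}$. An allocation is a partition $(G_1,\dots,G_k)$ of $G$; agents of $A_i$ get $u_a(G_i)$. It is EF$c$ for $a\in A_i$ if for every $i'$ there is $C\subseteq G_{i'}$, $|C|\le c$, with $u_a(G_i)\ge u_a(G_{i'}\setminus C)$. An allocation is $h$-democratic EF$c$ if for each $i$ at least $h\cdot n_i$ agents of $A_i$ find it EF$c$. *)

theory Defs
  imports Complex_Main
begin

(* Instance: goods are a finite set G of naturals; groups are indexed 0..<k;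
  group i has agent set A i; u i a g is the (binary) utility of agent a of group i
  for good g. *)

definition grp_bundle :: "nat set \<Rightarrow> (nat \<Rightarrow> nat) \<Rightarrow> nat \<Rightarrow> nat set" where
  "grp_bundle G alloc i = {g \<in> G. alloc g = i}"

definition is_allocation :: "nat set \<Rightarrow> nat \<Rightarrow> (nat \<Rightarrow> nat) \<Rightarrow> bool" where
  "is_allocation G k alloc \<longleftrightarrow> (\<forall>g\<in>G. alloc g < k)"

definition binary_instance ::
  "nat set \<Rightarrow> nat \<Rightarrow> (nat \<Rightarrow> nat set) \<Rightarrow> (nat \<Rightarrow> nat \<Rightarrow> nat \<Rightarrow> nat) \<Rightarrow> bool" where
  "binary_instance G k A u \<longleftrightarrow> finite G \<and>
     (\<forall>i<k. finite (A i) \<and> A i \<noteq> {}) \<and>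
     (\<forall>i<k. \<forall>a\<in>A i. \<forall>g\<in>G. u i a g \<in> {0, 1})"

definition EFc_agent ::
  "nat set \<Rightarrow> nat \<Rightarrow> (nat \<Rightarrow> nat \<Rightarrow> nat \<Rightarrow> nat) \<Rightarrow> (nat \<Rightarrow> nat) \<Rightarrow> nat \<Rightarrow> nat \<Rightarrow> nat \<Rightarrow> bool" where
  "EFc_agent G k u alloc c i a \<longleftrightarrow>
     (\<forall>i'<k. \<exists>C \<subseteq> grp_bundle G alloc i'. card C \<le> c \<and>
        sum (u i a) (grp_bundle G alloc i' - C) \<le> sum (u i a) (grp_bundle G alloc i))"

definition h_democratic_EFc ::
  "nat set \<Rightarrow> nat \<Rightarrow> (nat \<Rightarrow> nat set) \<Rightarrow> (nat \<Rightarrow> nat \<Rightarrow> nat \<Rightarrow> nat) \<Rightarrow> real \<Rightarrow> nat \<Rightarrow> (nat \<Rightarrow> nat) \<Rightarrow> bool" where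
  "h_democratic_EFc G k A u h c alloc \<longleftrightarrow>
     (\<forall>i<k. real (card {a \<in> A i. EFc_agent G k u alloc c i a}) \<ge> h * real (card (A i)))"

end

theory Submission
  imports Defs "HOL-Library.Nat_Bijection"
begin


lemma cb_id: "(Suc (Suc (2*r)) choose Suc r) * Suc r = 2 * (2*r+1) * ((2*r) choose r)"
proof -
  define P where "P = (Suc (Suc (2*r)) choose Suc r)"
  define Q where "Q = (Suc (2*r) choose r)"
  define R where "R = ((2*r) choose r)"
  have a: "Suc (Suc (2*r)) * Q = P * Suc r"
    unfolding P_def Q_def by (rule Suc_times_binomial_eq)
  have b: "Suc (2*r) * R = (Suc (2*r) choose Suc r) * Suc r"
    unfolding R_def by (rule Suc_times_binomial_eq)
  have le: "Suc r \<le> Suc (2*r)" by simp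
  have c0: "Suc (2*r) choose Suc r = Suc (2*r) choose (Suc (2*r) - Suc r)"
    by (rule binomial_symmetric[OF le])
  have d0: "Suc (2*r) - Suc r = r" by simp
  have c: "(Suc (2*r) choose Suc r) = Q" unfolding Q_def c0 d0 ..
  have b': "Suc (2*r) * R = Q * Suc r" using b unfolding c .
  have a': "2 * Suc r * Q = P * Suc r" using a by simp
  hence "Suc r * (2 * Q) = Suc r * P" by (simp only: ac_simps)
  hence "P = 2 * Q" by (subst (asm) nat_mult_eq_cancel1) simp_all
  hence "P * Suc r = 2 * (Q * Suc r)" by simp
  also have "\<dots> = 2 * (Suc (2*r) * R)" using b' by simp
  finally have "P * Suc r = 2 * (2*r+1) * R" by simp
  thus ?thesis unfolding P_def R_def .
qed

lemma cb: "((2*r) choose r)^2 * (2*r+1) \<le> (16::nat)^r"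
proof (induction r)
  case 0 then show ?case by simp
next
  case (Suc r)
  define C where "C = (2*r) choose r"
  define D where "D = (Suc (Suc (2*r)) choose Suc r)"
  have id: "D * Suc r = 2*(2*r+1)*C" unfolding C_def D_def by (rule cb_id)
  have IH: "C^2*(2*r+1) \<le> 16^r" using Suc C_def by simp
  have "D^2 * (2*r+3) * (Suc r)^2 = (D * Suc r)^2 * (2*r+3)" by (simp only: power_mult_distrib mult.commute mult.left_commute)
  also have "\<dots> = 4*(2*r+1)*(2*r+3) * (C^2 *(2*r+1))" unfolding id by (simp add: power2_eq_square algebra_simps)
  also have "\<dots> \<le> 4*(2*r+1)*(2*r+3) * 16^r" using IH by (intro mult_left_mono) auto
  also have "\<dots> \<le> 4*(4*(Suc r)^2) * 16^r"
    by (intro mult_right_mono mult_left_mono) (auto simp: power2_eq_square algebra_simps)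
  also have "\<dots> = 16^(Suc r) * (Suc r)^2" by simp
  finally have "D^2 * (2*r+3) * (Suc r)^2 \<le> 16^(Suc r) * (Suc r)^2" .
  hence X: "D^2 * (2*r+3) \<le> 16^(Suc r)" by simp
  have e1: "2*r+3 = 2 * Suc r + 1" by simp
  have e2: "Suc (Suc (2*r)) = 2 * Suc r" by simp
  show ?case using X unfolding D_def e1 e2 .
qed

lemma cb2: "(n choose (n div 2))^2 * n \<le> (4::nat)^n"
proof (cases "even n")
  case True
  then obtain r where n: "n = 2*r" by auto
  have "(n choose (n div 2))^2 * n \<le> ((2*r) choose r)^2 * (2*r+1)" using n by simp
  also have "\<dots> \<le> 16^r" by (rule cb)
  also have "\<dots> = 4^n" using n by (simp add: power_mult)
  finally show ?thesis .
next
  case False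
  then obtain r where n: "n = 2*r+1" by (metis oddE)
  have "n choose (n div 2) = Suc (2*r) choose r" using n by simp
  also have "\<dots> \<le> 2 * ((2*r) choose r)"
  proof (cases r)
    case 0 then show ?thesis by simp
  next
    case (Suc q)
    have "Suc (2*r) choose Suc q = (2*r choose q) + (2*r choose Suc q)" by (rule binomial_Suc_Suc)
    hence "Suc (2*r) choose r = (2*r choose q) + (2*r choose r)" unfolding Suc[symmetric] .
    also have "(2*r choose q) \<le> (2*r) choose r" using binomial_maximum'[of r q] by simp
    finally show ?thesis by simp
  qed
  finally have le: "n choose (n div 2) \<le> 2 * ((2*r) choose r)" .
  have "(n choose (n div 2))^2 * n \<le> (2 * ((2*r) choose r))^2 * (2*r+1)"
    using le n by (intro mult_mono power_mono) auto
  also have "\<dots> = 4 * (((2*r) choose r)^2 * (2*r+1))" by (simp add: power2_eq_square)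
  also have "\<dots> \<le> 4 * 16^r" by (rule mult_le_mono2[OF cb])
  also have "\<dots> = 4^n" using n by (simp add: power_mult)
  finally show ?thesis .
qed

lemma binom_small:
  assumes "(d::real) > 0"
  shows "\<exists>L. \<forall>n\<ge>L. \<forall>l. real (n choose l) \<le> d * 2^n"
proof -
  obtain L::nat where L: "real L > 1/d^2" using reals_Archimedean2 by blast
  have "\<forall>n\<ge>L. \<forall>l. real (n choose l) \<le> d * 2^n"
  proof (intro allI impI)
    fix n l assume nL: "n \<ge> L"
    have npos: "real n > 1/d^2" using L nL by linarith
    have m1: "real (n choose l) \<le> real (n choose (n div 2))" using binomial_maximum by simp
    moreover have "(real (n choose (n div 2)))^2 * real n \<le> 4^n"
    proof -
      have "real ((n choose (n div 2))^2 * n) \<le> real ((4::nat)^n)" using cb2[of n] by (rule of_nat_mono)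
      thus ?thesis by simp
    qed
    moreover have "(real (n choose l))^2 * real n \<le> (real (n choose (n div 2)))^2 * real n"
      by (rule mult_right_mono[OF power_mono[OF m1]]) simp_all
    ultimately have "(real (n choose l))^2 * real n \<le> 4^n" by linarith
    moreover have "(d * 2^n)^2 * real n \<ge> 4^n"
    proof -
      have "d^2 * real n \<ge> 1" using npos assms by (simp add: field_simps)
      hence ge: "4^n * (d^2 * real n) \<ge> 4^n * 1" by (intro mult_left_mono) auto
      have eq: "(d * 2^n)^2 = d^2 * 4^n"
      proof -
        have e1: "(4::real)^n = 2^(2*n)" by (simp add: power_mult)
        have e2: "((2::real)^n)^2 = 2^(2*n)" by (simp add: power_mult[symmetric] mult.commute)
        show ?thesis unfolding power_mult_distrib e1 e2 by simp
      qed
      have "(d*2^n)^2 * real n = 4^n * (d^2*real n)" unfolding eq by (simp add: algebra_simps)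
      moreover from ge have "4^n \<le> 4^n * (d^2*real n)" by simp
      ultimately show ?thesis by linarith
    qed
    ultimately have "(real (n choose l))^2 * real n \<le> (d * 2^n)^2 * real n" by linarith
    moreover have "real n > 0"
    proof -
      have "1/d^2 > 0" using assms by simp
      thus ?thesis using npos by linarith
    qed
    ultimately have "(real (n choose l))^2 \<le> (d * 2^n)^2" by simp
    then show "real (n choose l) \<le> d * 2^n"
      by (rule power2_le_imp_le) (use assms in simp)
  qed
  then show ?thesis by blast
qed


lemma card_subsets_in:
  assumes "finite D" "finite V"
  shows "card {U. U \<subseteq> D \<and> card U \<in> V} \<le> (\<Sum>l\<in>V. card D choose l)"
proof -
  have "{U. U \<subseteq> D \<and> card U \<in> V} = (\<Union>l\<in>V. {U. U \<subseteq> D \<and> card U = l})" by auto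
  hence "card {U. U \<subseteq> D \<and> card U \<in> V} \<le> (\<Sum>l\<in>V. card {U. U \<subseteq> D \<and> card U = l})"
    using card_UN_le[OF assms(2)] by simp
  also have "\<dots> = (\<Sum>l\<in>V. card D choose l)" using n_subsets[OF assms(1)] by simp
  finally show ?thesis .
qed

lemma window:
  assumes finG: "finite G" and DG: "D \<subseteq> G" and fW: "\<And>T. finite (W T)" and cW: "\<And>T. card (W T) \<le> w"
  shows "card {S. S \<subseteq> G \<and> card (S \<inter> D) \<in> W (S - D)}
           \<le> w * (card D choose (card D div 2)) * 2^(card G - card D)"
proof -
  have finD: "finite D" using finG DG finite_subset by blast
  let ?Sig = "SIGMA T:Pow (G - D). {U. U \<subseteq> D \<and> card U \<in> W T}"
  have sub: "{S. S \<subseteq> G \<and> card (S \<inter> D) \<in> W (S - D)} \<subseteq> (\<lambda>(T,U). U \<union> T) ` ?Sig"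
  proof
    fix S assume S: "S \<in> {S. S \<subseteq> G \<and> card (S \<inter> D) \<in> W (S - D)}"
    have "S = (\<lambda>(T,U). U \<union> T) (S - D, S \<inter> D)" by auto
    moreover have "(S - D, S \<inter> D) \<in> ?Sig" using S by auto
    ultimately show "S \<in> (\<lambda>(T,U). U \<union> T) ` ?Sig" by blast
  qed
  have finSig: "finite ?Sig"
    by (intro finite_SigmaI) (use finG finD in auto)
  have "card {S. S \<subseteq> G \<and> card (S \<inter> D) \<in> W (S - D)} \<le> card ((\<lambda>(T,U). U \<union> T) ` ?Sig)"
    by (rule card_mono[OF finite_imageI[OF finSig] sub])
  also have "\<dots> \<le> card ?Sig" by (rule card_image_le[OF finSig])
  also have "\<dots> = (\<Sum>T\<in>Pow (G - D). card {U. U \<subseteq> D \<and> card U \<in> W T})"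
    by (rule card_SigmaI) (use finG finD in auto)
  also have "\<dots> \<le> (\<Sum>T\<in>Pow (G - D). w * (card D choose (card D div 2)))"
  proof (rule sum_mono)
    fix T
    have "card {U. U \<subseteq> D \<and> card U \<in> W T} \<le> (\<Sum>l\<in>W T. card D choose l)"
      by (rule card_subsets_in[OF finD fW])
    also have "\<dots> \<le> (\<Sum>l\<in>W T. card D choose (card D div 2))"
      by (intro sum_mono binomial_maximum)
    also have "\<dots> = card (W T) * (card D choose (card D div 2))" by simp
    also have "\<dots> \<le> w * (card D choose (card D div 2))" using cW by (intro mult_right_mono) auto
    finally show "card {U. U \<subseteq> D \<and> card U \<in> W T} \<le> w * (card D choose (card D div 2))" .
  qed
  also have "\<dots> = w * (card D choose (card D div 2)) * 2^(card G - card D)"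
    using finG finD DG by (simp add: card_Pow card_Diff_subset)
  finally show ?thesis .
qed
definition satS :: "nat set \<Rightarrow> (nat \<Rightarrow> nat set) \<Rightarrow> nat \<Rightarrow> nat \<Rightarrow> nat \<Rightarrow> nat set set" where
  "satS G B k c i = {S. S \<subseteq> G \<and> (\<forall>i'<k. card (S \<inter> B i') \<le> card (S \<inter> B i) + c)}"

lemma win_real:
  assumes finG: "finite G" and DG: "D \<subseteq> G" and fW: "\<And>T. finite (W T)" and cW: "\<And>T. card (W T) \<le> w"
    and L: "\<forall>n\<ge>L. \<forall>l. real (n choose l) \<le> d * 2^n" and DL: "L \<le> card D"
  shows "real (card {S. S \<subseteq> G \<and> card (S \<inter> D) \<in> W (S - D)}) \<le> real w * d * 2^(card G)"
proof -
  have cD: "card D \<le> card G" using card_mono[OF finG DG] .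
  have "real (card {S. S \<subseteq> G \<and> card (S \<inter> D) \<in> W (S - D)})
        \<le> real (w * (card D choose (card D div 2)) * 2^(card G - card D))"
    using window[of G D W w, OF finG DG fW cW] by linarith
  also have "\<dots> = real w * real (card D choose (card D div 2)) * 2^(card G - card D)" by simp
  also have "\<dots> \<le> real w * (d * 2^(card D)) * 2^(card G - card D)"
    using L DL by (intro mult_right_mono mult_left_mono) auto
  also have "\<dots> = real w * d * (2^(card D) * 2^(card G - card D))" by simp
  also have "2^(card D) * 2^(card G - card D) = (2::real)^(card G)"
    using cD by (simp add: power_add[symmetric])
  finally show ?thesis by simp
qed

lemma core:
  assumes finG: "finite G" and Bsub: "\<And>i. B i \<subseteq> G"
    and disj: "\<And>i j. i \<noteq> j \<Longrightarrow> B i \<inter> B j = {}"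
    and p: "p < k" and Bp: "N \<le> card (B p)"
    and L: "\<forall>n\<ge>L. \<forall>l. real (n choose l) \<le> d * 2^n"
    and N: "\<forall>n\<ge>N. \<forall>l. real (n choose l) \<le> d' * 2^n"
    and dpos: "d \<ge> 0"
  shows "real (card {S. S \<subseteq> G \<and> (\<exists>i<k. \<exists>j<k. i \<noteq> j \<and> S \<in> satS G B k c i \<and> S \<in> satS G B k c j)})
     \<le> (real k * real k * (2*real c+1) * d + (real L + real c) * d') * 2^card G"
proof -
  define bad where "bad = {S. S \<subseteq> G \<and> (\<exists>i<k. \<exists>j<k. i \<noteq> j \<and> S \<in> satS G B k c i \<and> S \<in> satS G B k c j)}"
  define WW where "WW = (\<lambda>j T. {n. card (T \<inter> B j) \<le> n + c \<and> n \<le> card (T \<inter> B j) + c})"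
  define Win where "Win = (\<lambda>i j. {S. S \<subseteq> G \<and> card (S \<inter> B i) \<in> WW j (S - B i)})"
  define Sm where "Sm = {S. S \<subseteq> G \<and> card (S \<inter> B p) \<in> (\<lambda>T. {..<L+c}) (S - B p)}"
  define P where "P = {(i,j). i<k \<and> j<k \<and> L \<le> card (B i)}"
  have finB: "\<And>i. finite (B i)" using finG Bsub finite_subset by blast
  have fWW: "finite (WW j T)" for j T
    by (rule finite_subset[of _ "{..card (T \<inter> B j) + c}"]) (auto simp: WW_def)
  have cWW: "card (WW j T) \<le> 2*c+1" for j T
  proof -
    have "WW j T \<subseteq> {card (T \<inter> B j) - c .. card (T \<inter> B j) + c}" by (auto simp: WW_def)
    hence "card (WW j T) \<le> card {card (T \<inter> B j) - c .. card (T \<inter> B j) + c}" by (intro card_mono) auto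
    also have "\<dots> \<le> 2*c+1" by simp
    finally show ?thesis .
  qed
  have finP: "finite P" by (rule finite_subset[of _ "{..<k} \<times> {..<k}"]) (auto simp: P_def)
  have cP: "card P \<le> k*k"
  proof -
    have "card P \<le> card ({..<k} \<times> {..<k})" by (intro card_mono) (auto simp: P_def)
    thus ?thesis by (simp add: card_cartesian_product)
  qed
  have sub: "bad \<subseteq> (\<Union>(i,j)\<in>P. Win i j) \<union> Sm"
  proof
    fix S assume "S \<in> bad"
    then obtain i j where S: "S \<subseteq> G" "i<k" "j<k" "i\<noteq>j" "S \<in> satS G B k c i" "S \<in> satS G B k c j"
      unfolding bad_def by blast
    have ij: "card (S \<inter> B j) \<le> card (S \<inter> B i) + c" and ji: "card (S \<inter> B i) \<le> card (S \<inter> B j) + c"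
      and pi: "card (S \<inter> B p) \<le> card (S \<inter> B i) + c"
      using S p unfolding satS_def by auto
    have e1: "(S - B i) \<inter> B j = S \<inter> B j" using disj[OF S(4)] by blast
    have e2: "(S - B j) \<inter> B i = S \<inter> B i" using disj[OF S(4)] by blast
    consider "L \<le> card (B i)" | "L \<le> card (B j)" | "card (B i) < L" by linarith
    then show "S \<in> (\<Union>(i,j)\<in>P. Win i j) \<union> Sm"
    proof cases
      case 1
      hence "(i,j) \<in> P" using S by (auto simp: P_def)
      moreover have "S \<in> Win i j" using S ij ji e1 by (auto simp: Win_def WW_def)
      ultimately show ?thesis by blast
    next
      case 2
      hence "(j,i) \<in> P" using S by (auto simp: P_def)
      moreover have "S \<in> Win j i" using S ij ji e2 by (auto simp: Win_def WW_def)
      ultimately show ?thesis by blast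
    next
      case 3
      have "card (S \<inter> B i) \<le> card (B i)" by (intro card_mono finB) auto
      hence "card (S \<inter> B p) < L + c" using 3 pi by linarith
      hence "S \<in> Sm" using S by (auto simp: Sm_def)
      thus ?thesis by blast
    qed
  qed
  have finPow: "finite (Pow G)" using finG by simp
  have "card bad \<le> card ((\<Union>(i,j)\<in>P. Win i j) \<union> Sm)"
    by (rule card_mono[OF _ sub]) (rule finite_subset[OF _ finPow], auto simp: Win_def Sm_def)
  also have "\<dots> \<le> card (\<Union>(i,j)\<in>P. Win i j) + card Sm" by (rule card_Un_le)
  also have "card (\<Union>(i,j)\<in>P. Win i j) \<le> (\<Sum>(i,j)\<in>P. card (Win i j))"
    using card_UN_le[OF finP, of "\<lambda>x. Win (fst x) (snd x)"] by (simp add: case_prod_beta')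
  finally have cb: "real (card bad) \<le> (\<Sum>(i,j)\<in>P. real (card (Win i j))) + real (card Sm)"
    by (simp add: case_prod_beta' flip: of_nat_sum)
  have w1: "real (card (Win i j)) \<le> (2*real c+1) * d * 2^(card G)" if "(i,j) \<in> P" for i j
  proof -
    have "real (card (Win i j)) \<le> real (2*c+1) * d * 2^(card G)"
      unfolding Win_def
      by (rule win_real[OF finG Bsub fWW cWW L]) (use that in \<open>auto simp: P_def\<close>)
    thus ?thesis by (simp add: algebra_simps)
  qed
  have "(\<Sum>(i,j)\<in>P. real (card (Win i j))) \<le> (\<Sum>(i,j)\<in>P. (2*real c+1) * d * 2^(card G))"
    by (rule sum_mono) (use w1 in auto)
  also have "\<dots> = real (card P) * ((2*real c+1) * d * 2^(card G))" by simp
  also have "\<dots> \<le> real (k*k) * ((2*real c+1) * d * 2^(card G))"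
    using cP dpos by (intro mult_right_mono) (auto simp del: of_nat_mult simp add: of_nat_mono)
  finally have s1: "(\<Sum>(i,j)\<in>P. real (card (Win i j))) \<le> real k * real k * (2*real c+1) * d * 2^(card G)"
    by (simp add: algebra_simps)
  have s2: "real (card Sm) \<le> real (L + c) * d' * 2^(card G)"
    unfolding Sm_def by (rule win_real[OF finG Bsub _ _ N Bp]) auto
  show ?thesis using cb s1 s2 unfolding bad_def[symmetric] by (simp add: algebra_simps)
qed

theorem mainTheorem15:
  fixes k c :: nat and h :: real
  assumes "k \<ge> 2" and "c \<ge> 1" and "h > 1 / real k"
  shows "\<exists>G A u. binary_instance G k A u \<and>
           \<not> (\<exists>alloc. is_allocation G k alloc \<and> h_democratic_EFc G k A u h c alloc)"
proof -
  have kpos: "real k > 0" using assms(1) by simp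
  have kh: "real k * h > 1" using assms(3) kpos by (simp add: field_simps)
  define \<eta> where "\<eta> = (real k * h - 1) / real k"
  have etapos: "\<eta> > 0" using kh kpos by (simp add: \<eta>_def)
  have keta: "real k * \<eta> = real k * h - 1" using kpos by (simp add: \<eta>_def)
  define d where "d = \<eta> / (3 * (real k * real k * (2*real c+1)))"
  have dpos: "d > 0" using etapos kpos by (simp add: d_def)
  obtain L where L: "\<forall>n\<ge>L. \<forall>l. real (n choose l) \<le> d * 2^n" using binom_small[OF dpos] by blast
  define d' where "d' = \<eta> / (3 * (real L + real c))"
  have Lc: "real L + real c > 0" using assms(2) by simp
  have d'pos: "d' > 0" using etapos Lc by (simp add: d'_def)
  obtain N where N: "\<forall>n\<ge>N. \<forall>l. real (n choose l) \<le> d' * 2^n" using binom_small[OF d'pos] by blast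
  have e1: "real k * real k * (2*real c+1) * d = \<eta> / 3"
  proof -
    have X: "real k * real k * (2*real c+1) > 0" using kpos by simp
    show ?thesis unfolding d_def using X by (simp add: field_simps)
  qed
  have e2: "(real L + real c) * d' = \<eta> / 3"
    using Lc by (simp add: d'_def field_simps)
  define m where "m = k*N"
  define G :: "nat set" where "G = {..<m}"
  define A :: "nat \<Rightarrow> nat set" where "A = (\<lambda>i. set_encode ` Pow G)"
  define u :: "nat \<Rightarrow> nat \<Rightarrow> nat \<Rightarrow> nat" where "u = (\<lambda>i a g. if g \<in> set_decode a then 1 else 0)"
  have finG: "finite G" by (simp add: G_def)
  have cardG: "card G = m" by (simp add: G_def)
  have injA: "inj_on set_encode (Pow G)"
    by (rule inj_on_subset[OF inj_on_set_encode]) (use finG finite_subset in auto)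
  have cardA: "card (A i) = 2^m" for i
    unfolding A_def using card_image[OF injA] finG cardG by (simp add: card_Pow)
  have binst: "binary_instance G k A u"
    unfolding binary_instance_def using finG by (auto simp: A_def u_def)
  have noalloc: "\<not> (\<exists>alloc. is_allocation G k alloc \<and> h_democratic_EFc G k A u h c alloc)"
  proof
    assume "\<exists>alloc. is_allocation G k alloc \<and> h_democratic_EFc G k A u h c alloc"
    then obtain alloc where al: "is_allocation G k alloc" and hd: "h_democratic_EFc G k A u h c alloc"
      by blast
    define B where "B = grp_bundle G alloc"
    have Bsub: "\<And>i. B i \<subseteq> G" by (auto simp: B_def grp_bundle_def)
    have disj: "\<And>i j. i \<noteq> j \<Longrightarrow> B i \<inter> B j = {}" by (auto simp: B_def grp_bundle_def)
    have finB: "\<And>i. finite (B i)" using finG Bsub finite_subset by blast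
    have sumU: "sum (u i (set_encode S)) X = card (X \<inter> S)" if "S \<subseteq> G" "finite X" for i S X
    proof -
      have "finite S" using that finG finite_subset by blast
      hence "u i (set_encode S) = (\<lambda>g. if g \<in> S then 1 else 0)" by (simp add: u_def)
      thus ?thesis using that(2) by (simp add: sum.If_cases Int_def)
    qed
    have finsat: "finite (satS G B k c i)" for i
      by (rule finite_subset[of _ "Pow G"]) (auto simp: satS_def finG)
    have satsub: "{a \<in> A i. EFc_agent G k u alloc c i a} \<subseteq> set_encode ` satS G B k c i" for i
    proof
      fix a assume a: "a \<in> {a \<in> A i. EFc_agent G k u alloc c i a}"
      then obtain S where S: "S \<subseteq> G" "a = set_encode S" by (auto simp: A_def)
      have "card (S \<inter> B i') \<le> card (S \<inter> B i) + c" if i': "i' < k" for i'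
      proof -
        obtain C where C: "C \<subseteq> B i'" "card C \<le> c"
          "sum (u i a) (B i' - C) \<le> sum (u i a) (B i)"
          using a i' unfolding EFc_agent_def B_def by blast
        have "card ((B i' - C) \<inter> S) \<le> card (B i \<inter> S)"
          using C(3) sumU[OF S(1)] finB S(2) by simp
        moreover have "card (S \<inter> B i') \<le> card ((B i' - C) \<inter> S) + card C"
        proof -
          have "card (S \<inter> B i') \<le> card (((B i' - C) \<inter> S) \<union> C)"
            by (rule card_mono) (use finB C(1) finite_subset in auto)
          also have "\<dots> \<le> card ((B i' - C) \<inter> S) + card C" by (rule card_Un_le)
          finally show ?thesis .
        qed
        ultimately show ?thesis using C(2) by (simp add: Int_commute)
      qed
      hence "S \<in> satS G B k c i" using S by (auto simp: satS_def)
      thus "a \<in> set_encode ` satS G B k c i" using S by blast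
    qed
    have satlow: "h * 2^m \<le> real (card (satS G B k c i))" if "i < k" for i
    proof -
      have "h * 2^m = h * real (card (A i))" using cardA by simp
      also have "\<dots> \<le> real (card {a \<in> A i. EFc_agent G k u alloc c i a})"
        using hd that unfolding h_democratic_EFc_def by blast
      also have "\<dots> \<le> real (card (set_encode ` satS G B k c i))"
        using card_mono[OF finite_imageI[OF finsat] satsub] by simp
      also have "\<dots> \<le> real (card (satS G B k c i))" using card_image_le[OF finsat] by simp
      finally show ?thesis .
    qed
    define bad where "bad = {S. S \<subseteq> G \<and> (\<exists>i<k. \<exists>j<k. i \<noteq> j \<and> S \<in> satS G B k c i \<and> S \<in> satS G B k c j)}"
    have sumsat: "(\<Sum>i<k. card (satS G B k c i)) \<le> 2^m + k * card bad"
    proof -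
      have "(\<Sum>i<k. card (satS G B k c i)) = (\<Sum>i<k. card (satS G B k c i \<inter> bad) + card (satS G B k c i - bad))"
        by (intro sum.cong refl card_Int_Diff finsat)
      also have "\<dots> = (\<Sum>i<k. card (satS G B k c i \<inter> bad)) + (\<Sum>i<k. card (satS G B k c i - bad))"
        by (rule sum.distrib)
      also have "(\<Sum>i<k. card (satS G B k c i - bad)) = card (\<Union>i<k. satS G B k c i - bad)"
      proof (rule card_UN_disjoint[symmetric])
        show "\<forall>i\<in>{..<k}. finite (satS G B k c i - bad)" using finsat by simp
        have satG: "\<And>S i. S \<in> satS G B k c i \<Longrightarrow> S \<subseteq> G" by (simp add: satS_def)
        show "\<forall>i\<in>{..<k}. \<forall>j\<in>{..<k}. i \<noteq> j \<longrightarrow> (satS G B k c i - bad) \<inter> (satS G B k c j - bad) = {}"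
          unfolding bad_def using satG by blast
      qed simp
      also have "\<dots> \<le> card (Pow G)"
        by (rule card_mono) (auto simp: finG satS_def)
      also have "card (Pow G) = 2^m" using finG cardG by (simp add: card_Pow)
      also have "(\<Sum>i<k. card (satS G B k c i \<inter> bad)) \<le> (\<Sum>i<k. card bad)"
        by (intro sum_mono card_mono) (auto simp: bad_def finG)
      also have "(\<Sum>i<k. card bad) = k * card bad" by simp
      finally show ?thesis by simp
    qed
    have "\<exists>p<k. N \<le> card (B p)"
    proof (rule ccontr)
      assume "\<not> (\<exists>p<k. N \<le> card (B p))"
      hence lt: "\<And>p. p < k \<Longrightarrow> card (B p) < N" by auto
      have "G \<subseteq> (\<Union>i<k. B i)" using al by (auto simp: is_allocation_def B_def grp_bundle_def)
      hence "card G \<le> card (\<Union>i<k. B i)" by (intro card_mono) (auto simp: finB)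
      also have "\<dots> \<le> (\<Sum>i<k. card (B i))" by (rule card_UN_le) simp
      also have "\<dots> < (\<Sum>i<k. N)" by (rule sum_strict_mono) (use assms(1) lt in \<open>auto simp: lessThan_empty_iff\<close>)
      also have "\<dots> = m" by (simp add: m_def)
      finally show False using cardG by simp
    qed
    then obtain p where p: "p < k" "N \<le> card (B p)" by blast
    have badb: "real (card bad) \<le> (real k * real k * (2*real c+1) * d + (real L + real c) * d') * 2^card G"
      unfolding bad_def
    proof (rule core[of G B p k N L d d' c])
    qed (use finG Bsub disj p L N dpos in auto)
    hence badb2: "real (card bad) \<le> (2/3 * \<eta>) * 2^m" using e1 e2 cardG by simp
    have "real k * h * 2^m = (\<Sum>i<k. h * 2^m)" by simp
    also have "\<dots> \<le> (\<Sum>i<k. real (card (satS G B k c i)))" by (rule sum_mono) (use satlow in auto)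
    also have "\<dots> = real (\<Sum>i<k. card (satS G B k c i))" by simp
    also have "\<dots> \<le> real (2^m + k * card bad)" using sumsat by (simp only: of_nat_le_iff)
    also have "\<dots> = 2^m + real k * real (card bad)" by simp
    also have "\<dots> \<le> 2^m + real k * ((2/3 * \<eta>) * 2^m)" using badb2 kpos by simp
    also have "\<dots> < 2^m + real k * (\<eta> * 2^m)" using kpos etapos by simp
    also have "\<dots> = real k * h * 2^m"
    proof -
      have "2^m + real k * (\<eta> * 2^m) = (1 + real k * \<eta>) * (2::real)^m" by (simp add: algebra_simps)
      thus ?thesis using keta by simp
    qed
    finally show False by simp
  qed
  show ?thesis using binst noalloc by blast
qed

end
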